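(* Let $X$ be any one of the sequences $F,L,J,j,P,Q$. Then for all integers $a,b,c,d,e,m$, $$(X_{d-a}X_{e-b}-X_{e-a}X_{d-b})X_{m-c}=(X_{d-c}X_{e-b}-X_{e-c}X_{d-b})X_{m-a}+(X_{d-a}X_{e-c}-X_{e-a}X_{d-c})X_{m-b}.$$
   Context: All sequences are indexed by $n\in\mathbb Z$. Fibonacci numbers $F_n$ and Lucas numbers $L_n$: $F_n=F_{n-1}+F_{n-2}$, $L_n=L_{n-1}+L_{n-2}$ for all $n\in\mathbb Z$, with $F_0=0,F_1=1,L_0=2,L_1=1$ (so $F_{-n}=(-1)^{n-1}F_n$, $L_{-n}=(-1)^nL_n$). Jacobsthal numbers $J_n$ and Jacobsthal–Lucas numbers $j_n$: $J_n=J_{n-1}+2J_{n-2}$, $j_n=j_{n-1}+2j_{n-2}$ for all $n\in\mathbb Z$, with $J_0=0,J_1=1,j_0=2,j_1=1$ (so $J_{-n}=(-1)^{n-1}2^{-n}J_n$, $j_{-n}=(-1)^n2^{-n}j_n$, rational for negative index). Pell numbers $P_n$ and Pell–Lucas numbers $Q_n$: $P_n=2P_{n-1}+P_{n-2}$, $Q_n=2Q_{n-1}+Q_{n-2}$ for all $n\in\mathbb Z$, with $P_0=0,P_1=1,Q_0=2,Q_1=2$ (so $P_{-n}=(-1)^{n-1}P_n$, $Q_{-n}=(-1)^nQ_n$). *)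

theory Defs
  imports Complex_Main
begin

(* Two-sided linear recurrence  x_n = p x_(n-1) + q x_(n-2)  (q <> 0), n in Z,
   with initial values x_0 = a, x_1 = b.  Values are real (Jacobsthal numbers
   with negative index are rational). *)

fun fwd :: "real \<Rightarrow> real \<Rightarrow> real \<Rightarrow> real \<Rightarrow> nat \<Rightarrow> real \<times> real" where
  "fwd p q a b 0 = (a, b)"
| "fwd p q a b (Suc k) = (let (u, v) = fwd p q a b k in (v, p * v + q * u))"

(* pairs (x_(-k), x_(-k+1)) for k >= 0, using x_(n-2) = (x_n - p x_(n-1)) / q *)
fun bwd :: "real \<Rightarrow> real \<Rightarrow> real \<Rightarrow> real \<Rightarrow> nat \<Rightarrow> real \<times> real" where
  "bwd p q a b 0 = (a, b)"
| "bwd p q a b (Suc k) = (let (u, v) = bwd p q a b k in ((v - p * u) / q, u))"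

definition linrec :: "real \<Rightarrow> real \<Rightarrow> real \<Rightarrow> real \<Rightarrow> int \<Rightarrow> real" where
  "linrec p q a b n = (if n \<ge> 0 then fst (fwd p q a b (nat n)) else fst (bwd p q a b (nat (- n))))"

definition Fib :: "int \<Rightarrow> real" where "Fib = linrec 1 1 0 1"
definition Luc :: "int \<Rightarrow> real" where "Luc = linrec 1 1 2 1"
definition Jac :: "int \<Rightarrow> real" where "Jac = linrec 1 2 0 1"
definition JacL :: "int \<Rightarrow> real" where "JacL = linrec 1 2 2 1"
definition Pell :: "int \<Rightarrow> real" where "Pell = linrec 2 1 0 1"
definition PellL :: "int \<Rightarrow> real" where "PellL = linrec 2 1 2 2"

lemma "Fib (-3) = 2 \<and> Jac (-1) = 1/2 \<and> PellL 3 = 14"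
  by (simp add: Fib_def Jac_def PellL_def linrec_def numeral_eq_Suc)

end

theory Submission
  imports Defs
begin

lemma fwd_snd: "snd (fwd p q a b k) = fst (fwd p q a b (Suc k))"
  by (simp add: case_prod_beta)

lemma fwd_rec: "fst (fwd p q a b (Suc (Suc k))) = p * fst (fwd p q a b (Suc k)) + q * fst (fwd p q a b k)"
  by (simp add: case_prod_beta)

lemma bwd_rec: "fst (bwd p q a b (Suc (Suc k))) = (fst (bwd p q a b k) - p * fst (bwd p q a b (Suc k))) / q"
  by (simp add: case_prod_beta)

lemma linrec_rec:
  assumes q: "q \<noteq> 0"
  shows "linrec p q a b (n + 2) = p * linrec p q a b (n + 1) + q * linrec p q a b n"
proof -
  consider "n \<ge> 0" | "n = -1" | "n \<le> -2" by linarith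
  then show ?thesis
  proof cases
    case 1
    then obtain k where k: "n = int k" by (metis nonneg_eq_int)
    have "nat (int k + 2) = Suc (Suc k)" "nat (int k + 1) = Suc k" by auto
    then show ?thesis using k fwd_rec[of p q a b k] by (simp add: linrec_def)
  next
    case 2
    then show ?thesis using q by (simp add: linrec_def field_simps)
  next
    case 3
    then obtain k where k: "n = - int k - 2" by (metis add.commute diff_add_cancel diff_minus_eq_add le_add_diff_inverse2 minus_diff_eq nonneg_eq_int  neg_le_iff_le  add_le_cancel_left  eq_diff_eq  diff_ge_0_iff_ge uminus_add_conv_diff)
    have e1: "nat (- (- int k - 2)) = Suc (Suc k)" "nat (- (- int k - 2 + 1)) = Suc k" by auto
    have L0: "linrec p q a b (- int k) = fst (bwd p q a b k)"
    proof (cases k)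
      case (Suc j)
      have "nat (int j + 1) = Suc j" by simp
      with Suc show ?thesis by (simp add: linrec_def del: bwd.simps)
    qed (simp add: linrec_def)
    have l2: "linrec p q a b n = fst (bwd p q a b (Suc (Suc k)))" "linrec p q a b (n+1) = fst (bwd p q a b (Suc k))"
      "linrec p q a b (n+2) = fst (bwd p q a b k)"
      using k e1 L0 by (auto simp: linrec_def simp del: bwd.simps)
    show ?thesis unfolding l2 bwd_rec using q by (simp add: field_simps)
  qed
qed

lemma two_sided_uniq:
  fixes f g :: "int \<Rightarrow> real"
  assumes q: "q \<noteq> 0"
    and rf: "\<And>n. f (n + 2) = p * f (n + 1) + q * f n"
    and rg: "\<And>n. g (n + 2) = p * g (n + 1) + q * g n"
    and "f 0 = g 0" "f 1 = g 1"
  shows "f n = g n"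
proof -
  have "f n = g n \<and> f (n + 1) = g (n + 1)"
  proof (induction n rule: int_induct[where k = 0])
    case base then show ?case using assms by simp
  next
    case (step1 i)
    then show ?case using rf[of i] rg[of i] by (simp add: add.assoc)
  next
    case (step2 i)
    have "q * f (i - 1) = f (i + 1) - p * f i" using rf[of "i - 1"] by (simp add: algebra_simps)
    moreover have "q * g (i - 1) = g (i + 1) - p * g i" using rg[of "i - 1"] by (simp add: algebra_simps)
    ultimately have "q * f (i - 1) = q * g (i - 1)" using step2 by simp
    then have "f (i - 1) = g (i - 1)" using q by simp
    then show ?case using step2 by simp
  qed
  then show ?thesis by simp
qed

lemma linrec_shift:
  assumes q: "q \<noteq> 0"
  shows "linrec p q a b (n + k) = linrec p q a b k * linrec p q 1 0 n + linrec p q a b (k + 1) * linrec p q 0 1 n"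
proof -
  let ?L = "linrec p q a b" and ?G = "linrec p q 1 0" and ?H = "linrec p q 0 1"
  show ?thesis
  proof (rule two_sided_uniq[where f = "\<lambda>n. ?L (n + k)" and g = "\<lambda>n. ?L k * ?G n + ?L (k + 1) * ?H n", OF q])
    fix n
    show "?L (n + 2 + k) = p * ?L (n + 1 + k) + q * ?L (n + k)"
      using linrec_rec[OF q, of p a b "n + k"] by (simp add: algebra_simps)
    show "?L k * ?G (n + 2) + ?L (k + 1) * ?H (n + 2) =
        p * (?L k * ?G (n + 1) + ?L (k + 1) * ?H (n + 1)) + q * (?L k * ?G n + ?L (k + 1) * ?H n)"
      using linrec_rec[OF q, of p 1 0 n] linrec_rec[OF q, of p 0 1 n] by (simp add: algebra_simps)
  next
    show "?L (0 + k) = ?L k * ?G 0 + ?L (k + 1) * ?H 0" by (simp add: linrec_def)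
    show "?L (1 + k) = ?L k * ?G 1 + ?L (k + 1) * ?H 1" by (simp add: linrec_def add.commute)
  qed
qed

lemma linrec_identity:
  assumes q: "q \<noteq> 0" and XX: "X = linrec p q x0 x1"
  shows "(X (d - a) * X (e - b) - X (e - a) * X (d - b)) * X (m - c) =
         (X (d - c) * X (e - b) - X (e - c) * X (d - b)) * X (m - a) +
         (X (d - a) * X (e - c) - X (e - a) * X (d - c)) * X (m - b)"
proof -
  have s: "\<And>n k. X (n - k) = X (- k) * linrec p q 1 0 n + X (- k + 1) * linrec p q 0 1 n"
    using linrec_shift[OF q] XX by (metis diff_conv_add_uminus)
  show ?thesis unfolding s by algebra
qed

theorem theorem2:
  fixes X :: "int \<Rightarrow> real" and a b c d e m :: int
  assumes "X \<in> {Fib, Luc, Jac, JacL, Pell, PellL}"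
  shows "(X (d - a) * X (e - b) - X (e - a) * X (d - b)) * X (m - c) =
         (X (d - c) * X (e - b) - X (e - c) * X (d - b)) * X (m - a) +
         (X (d - a) * X (e - c) - X (e - a) * X (d - c)) * X (m - b)"
  using assms
  by (auto simp: Fib_def Luc_def Jac_def JacL_def Pell_def PellL_def
      intro: linrec_identity[of 1 _ 1 0 1] linrec_identity[of 1 _ 1 2 1] linrec_identity[of 2 _ 1 0 1]
        linrec_identity[of 2 _ 1 2 1] linrec_identity[of 1 _ 2 0 1] linrec_identity[of 1 _ 2 2 2])

end
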